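(* Let $\Pi$ be an $\mathrm{LP}^{\mathrm{MLN}}$ program such that $\mathrm{SM}'[\Pi]$ is not empty. Then for every interpretation $I$, $P'_\Pi(I) = P_\Pi(I)$.
   Context: Fix a first-order signature $\sigma$ with no function constants of positive arity; Herbrand interpretations are identified with sets of ground atoms. A formula is negative if every occurrence of every atom is in the scope of negation. A rule has the form $A\leftarrow B\wedge N$ ($A$ a possibly empty disjunction of atoms, $B$ a conjunction of atoms, $N$ a negative formula), identified with $B\wedge N\rightarrow A$. For a ground program (finite set of rules) $\Pi$, the reduct $\Pi^I$ consists of $A\leftarrow B$ for all rules $A\leftarrow B\wedge N$ in $\Pi$ with $I\models N$; $I$ is a (deterministic) stable model of $\Pi$ if $I$ is a minimal Herbrand model of $\Pi^I$. An $\mathrm{LP}^{\mathrm{MLN}}$ program $\Pi$ is a finite set of weighted rules $w:R$, where $R$ is a rule and $w$ is a real number (soft rule) or the symbol $\alpha$ (hard rule); it is identified with its ground instance, each ground rule inheriting the weight of the rule it comes from. $\overline{\Pi}=\{R \mid w:R\in\Pi\}$; $\Pi_I$ is the set of $w:R\in\Pi$ with $I\models R$; $\Pi^{\rm hard}$ and $\Pi^{\rm soft}$ are the sets of hard and soft rules. $\mathrm{SM}[\Pi]=\{I\mid I \text{ is a stable model of } \overline{\Pi_I}\}$. With $\alpha$ treated as a real parameter, $W_\Pi(I)=\exp(\sum_{w:R\in\Pi_I} w)$ if $I\in\mathrm{SM}[\Pi]$ and $0$ otherwise, and $P_\Pi(I)=\lim_{\alpha\to\infty} W_\Pi(I)/\sum_{J\in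 \mathrm{SM}[\Pi]}W_\Pi(J)$. Further, $\mathrm{SM}'[\Pi]$ is the set of interpretations $I$ that are stable models of $\overline{\Pi_I}$ and satisfy $\overline{\Pi^{\rm hard}}$; $W'_\Pi(I)=\exp(\sum_{w:R\in(\Pi^{\rm soft})_I} w)$ if $I\in \mathrm{SM}'[\Pi]$ and $0$ otherwise; $P'_\Pi(I)=W'_\Pi(I)/\sum_{J\in\mathrm{SM}'[\Pi]}W'_\Pi(J)$. *)

theory Defs
  imports Complex_Main
begin

datatype 'a formula =
    FTop | FBot | FAtom 'a | FNeg "'a formula"
  | FConj "'a formula" "'a formula" | FDisj "'a formula" "'a formula"
  | FImp "'a formula" "'a formula"

fun fsat :: "'a set \<Rightarrow> 'a formula \<Rightarrow> bool" where
  "fsat I FTop = True"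
| "fsat I FBot = False"
| "fsat I (FAtom a) = (a \<in> I)"
| "fsat I (FNeg f) = (\<not> fsat I f)"
| "fsat I (FConj f g) = (fsat I f \<and> fsat I g)"
| "fsat I (FDisj f g) = (fsat I f \<or> fsat I g)"
| "fsat I (FImp f g) = (fsat I f \<longrightarrow> fsat I g)"

fun negative :: "'a formula \<Rightarrow> bool" where
  "negative FTop = True"
| "negative FBot = True"
| "negative (FAtom a) = False"
| "negative (FNeg f) = True"
| "negative (FConj f g) = (negative f \<and> negative g)"
| "negative (FDisj f g) = (negative f \<and> negative g)"
| "negative (FImp f g) = (negative f \<and> negative g)"

text \<open>A ground rule  A \<leftarrow> B \<and> N : head = disjunction of atoms (possibly empty),
  body = conjunction of atoms, nbody = negative formula.\<close>
record 'a rule =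
  head :: "'a list"
  body :: "'a list"
  nbody :: "'a formula"

definition rule_sat :: "'a set \<Rightarrow> 'a rule \<Rightarrow> bool" where
  "rule_sat I r \<longleftrightarrow> (set (body r) \<subseteq> I \<and> fsat I (nbody r) \<longrightarrow> set (head r) \<inter> I \<noteq> {})"

definition reduct :: "'a rule set \<Rightarrow> 'a set \<Rightarrow> ('a list \<times> 'a list) set" where
  "reduct P I = {(head r, body r) | r. r \<in> P \<and> fsat I (nbody r)}"

definition pos_model :: "'a set \<Rightarrow> ('a list \<times> 'a list) set \<Rightarrow> bool" where
  "pos_model I Q \<longleftrightarrow> (\<forall>(A, B) \<in> Q. set B \<subseteq> I \<longrightarrow> set A \<inter> I \<noteq> {})"

definition minimal_model :: "'a set \<Rightarrow> ('a list \<times> 'a list) set \<Rightarrow> bool" where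
  "minimal_model I Q \<longleftrightarrow> pos_model I Q \<and> (\<forall>J. J \<subset> I \<longrightarrow> \<not> pos_model J Q)"

definition stable_model :: "'a set \<Rightarrow> 'a rule set \<Rightarrow> bool" where
  "stable_model I P \<longleftrightarrow> minimal_model I (reduct P I)"

datatype weight = Soft real | Hard

type_synonym 'a lpmln = "(weight \<times> 'a rule) set"

definition rules_of :: "'a lpmln \<Rightarrow> 'a rule set" where
  "rules_of \<Pi> = snd ` \<Pi>"

definition sat_part :: "'a lpmln \<Rightarrow> 'a set \<Rightarrow> 'a lpmln" where
  "sat_part \<Pi> I = {wr \<in> \<Pi>. rule_sat I (snd wr)}"

definition hard_part :: "'a lpmln \<Rightarrow> 'a lpmln" where
  "hard_part \<Pi> = {wr \<in> \<Pi>. fst wr = Hard}"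

definition soft_part :: "'a lpmln \<Rightarrow> 'a lpmln" where
  "soft_part \<Pi> = {wr \<in> \<Pi>. fst wr \<noteq> Hard}"

text \<open>Value of a weight with alpha treated as the real parameter al.\<close>
fun wval :: "real \<Rightarrow> weight \<Rightarrow> real" where
  "wval al (Soft w) = w"
| "wval al Hard = al"

definition SM :: "'a lpmln \<Rightarrow> 'a set set" where
  "SM \<Pi> = {I. stable_model I (rules_of (sat_part \<Pi> I))}"

definition W :: "real \<Rightarrow> 'a lpmln \<Rightarrow> 'a set \<Rightarrow> real" where
  "W al \<Pi> I = (if I \<in> SM \<Pi> then exp (\<Sum>wr\<in>sat_part \<Pi> I. wval al (fst wr)) else 0)"

definition P :: "'a lpmln \<Rightarrow> 'a set \<Rightarrow> real" where
  "P \<Pi> I = Lim at_top (\<lambda>al. W al \<Pi> I / (\<Sum>J\<in>SM \<Pi>. W al \<Pi> J))"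

definition SM' :: "'a lpmln \<Rightarrow> 'a set set" where
  "SM' \<Pi> = {I. stable_model I (rules_of (sat_part \<Pi> I))
               \<and> (\<forall>r \<in> rules_of (hard_part \<Pi>). rule_sat I r)}"

definition W' :: "'a lpmln \<Rightarrow> 'a set \<Rightarrow> real" where
  "W' \<Pi> I = (if I \<in> SM' \<Pi> then exp (\<Sum>wr\<in>sat_part (soft_part \<Pi>) I. wval 0 (fst wr)) else 0)"

definition P' :: "'a lpmln \<Rightarrow> 'a set \<Rightarrow> real" where
  "P' \<Pi> I = W' \<Pi> I / (\<Sum>J\<in>SM' \<Pi>. W' \<Pi> J)"

definition lpmln_program :: "'a lpmln \<Rightarrow> bool" where
  "lpmln_program \<Pi> \<longleftrightarrow> finite \<Pi> \<and> (\<forall>wr \<in> \<Pi>. negative (nbody (snd wr)))"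

end

theory Submission
  imports Defs "HOL-Real_Asymp.Real_Asymp"
begin

lemma exp_neg_lim:
  assumes "(c::real) < 0" shows "((\<lambda>al. exp (s + al * c)) \<longlongrightarrow> 0) at_top"
  using assms by real_asymp

lemma stable_subset_heads:
  assumes "stable_model I (rules_of (sat_part \<Pi> I))"
  shows "I \<subseteq> (\<Union>wr\<in>\<Pi>. set (head (snd wr)))"
proof (rule ccontr)
  let ?H = "\<Union>wr\<in>\<Pi>. set (head (snd wr))"
  let ?Q = "reduct (rules_of (sat_part \<Pi> I)) I"
  assume "\<not> ?thesis"
  hence sub: "I \<inter> ?H \<subset> I" by blast
  from assms have pm: "pos_model I ?Q" and mn: "\<forall>J. J \<subset> I \<longrightarrow> \<not> pos_model J ?Q"
    unfolding stable_model_def minimal_model_def by auto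
  have "pos_model (I \<inter> ?H) ?Q"
    unfolding pos_model_def
  proof (intro ballI)
    fix x assume x: "x \<in> ?Q"
    obtain A B where xe: "x = (A,B)" by (cases x)
    from x xe obtain r where r: "r \<in> rules_of (sat_part \<Pi> I)" "A = head r" "B = body r"
      unfolding reduct_def by auto
    then have "set A \<subseteq> ?H" unfolding rules_of_def sat_part_def by auto
    moreover have "set B \<subseteq> I \<longrightarrow> set A \<inter> I \<noteq> {}" using pm x xe unfolding pos_model_def by auto
    ultimately show "case x of (A,B) \<Rightarrow> set B \<subseteq> I \<inter> ?H \<longrightarrow> set A \<inter> (I \<inter> ?H) \<noteq> {}"
      using xe by auto
  qed
  with mn sub show False by blast
qed

lemma finite_SM:
  assumes "finite \<Pi>" shows "finite (SM \<Pi>)"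
proof -
  have "SM \<Pi> \<subseteq> Pow (\<Union>wr\<in>\<Pi>. set (head (snd wr)))"
    using stable_subset_heads unfolding SM_def by blast
  moreover have "finite (\<Union>wr\<in>\<Pi>. set (head (snd wr)))" using assms by auto
  ultimately show ?thesis by (meson finite_Pow_iff finite_subset)
qed

theorem proposition2:
  fixes \<Pi> :: "'a lpmln" and I :: "'a set"
  assumes "lpmln_program \<Pi>"
    and "SM' \<Pi> \<noteq> {}"
  shows "P' \<Pi> I = P \<Pi> I"
proof -
  have fin: "finite \<Pi>" using assms(1) unfolding lpmln_program_def by auto
  define s where "s J = (\<Sum>wr\<in>sat_part (soft_part \<Pi>) J. wval 0 (fst wr))" for J
  define k where "k J = card (sat_part (hard_part \<Pi>) J)" for J
  define m where "m = card (hard_part \<Pi>)"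
  have finH: "finite (hard_part \<Pi>)" using fin unfolding hard_part_def by auto
  have sumeq: "(\<Sum>wr\<in>sat_part \<Pi> J. wval al (fst wr)) = s J + al * real (k J)" for al J
  proof -
    have un: "sat_part \<Pi> J = sat_part (soft_part \<Pi>) J \<union> sat_part (hard_part \<Pi>) J"
      unfolding sat_part_def soft_part_def hard_part_def by auto
    have dj: "sat_part (soft_part \<Pi>) J \<inter> sat_part (hard_part \<Pi>) J = {}"
      unfolding sat_part_def soft_part_def hard_part_def by auto
    have f1: "finite (sat_part (soft_part \<Pi>) J)" "finite (sat_part (hard_part \<Pi>) J)"
      using fin unfolding sat_part_def soft_part_def hard_part_def by auto
    have "(\<Sum>wr\<in>sat_part \<Pi> J. wval al (fst wr)) =
      (\<Sum>wr\<in>sat_part (soft_part \<Pi>) J. wval al (fst wr)) + (\<Sum>wr\<in>sat_part (hard_part \<Pi>) J. wval al (fst wr))"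
      unfolding un using sum.union_disjoint[OF f1 dj] by simp
    moreover have "(\<Sum>wr\<in>sat_part (soft_part \<Pi>) J. wval al (fst wr)) = s J"
      unfolding s_def
    proof (rule sum.cong)
      fix x assume "x \<in> sat_part (soft_part \<Pi>) J"
      then have "fst x \<noteq> Hard" unfolding sat_part_def soft_part_def by auto
      then show "wval al (fst x) = wval 0 (fst x)" by (cases "fst x") auto
    qed simp
    moreover have "(\<Sum>wr\<in>sat_part (hard_part \<Pi>) J. wval al (fst wr)) = al * real (k J)"
    proof -
      have "(\<Sum>wr\<in>sat_part (hard_part \<Pi>) J. wval al (fst wr)) = (\<Sum>wr\<in>sat_part (hard_part \<Pi>) J. al)"
        by (rule sum.cong) (auto simp: sat_part_def hard_part_def)
      then show ?thesis unfolding k_def by simp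
    qed
    ultimately show ?thesis by simp
  qed
  have kle: "k J \<le> m" for J
    unfolding k_def m_def using finH by (intro card_mono) (auto simp: sat_part_def)
  have SM'eq: "J \<in> SM' \<Pi> \<longleftrightarrow> J \<in> SM \<Pi> \<and> k J = m" for J
  proof -
    have "(\<forall>r \<in> rules_of (hard_part \<Pi>). rule_sat J r) \<longleftrightarrow> sat_part (hard_part \<Pi>) J = hard_part \<Pi>"
      unfolding rules_of_def sat_part_def by auto
    also have "\<dots> \<longleftrightarrow> k J = m"
    proof
      assume "k J = m"
      moreover have "sat_part (hard_part \<Pi>) J \<subseteq> hard_part \<Pi>" unfolding sat_part_def by auto
      ultimately show "sat_part (hard_part \<Pi>) J = hard_part \<Pi>"
        unfolding k_def m_def using finH card_subset_eq by blast
    qed (simp add: k_def m_def)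
    finally show ?thesis unfolding SM'_def SM_def by auto
  qed
  have sub: "SM' \<Pi> \<subseteq> SM \<Pi>" using SM'eq by auto
  have finSM: "finite (SM \<Pi>)" using finite_SM[OF fin] .
  have finSM': "finite (SM' \<Pi>)" using finite_subset[OF sub finSM] .
  define f where "f al J = exp (s J + al * (real (k J) - real m))" for al J
  define g where "g J = (if J \<in> SM' \<Pi> then exp (s J) else 0)" for J
  have flim: "((\<lambda>al. f al J) \<longlongrightarrow> g J) at_top" if "J \<in> SM \<Pi>" for J
  proof (cases "J \<in> SM' \<Pi>")
    case True
    then have "k J = m" using SM'eq by auto
    then show ?thesis unfolding f_def g_def using True by simp
  next
    case False
    then have "k J < m" using SM'eq that kle le_neq_implies_less by blast
    then have "real (k J) - real m < 0" by simp
    then show ?thesis unfolding f_def g_def using False exp_neg_lim by simp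
  qed
  have Wf: "W al \<Pi> J = exp (al * real m) * f al J" if "J \<in> SM \<Pi>" for al J
    unfolding W_def f_def using that sumeq by (simp add: exp_add[symmetric] algebra_simps)
  define D where "D = (\<Sum>J\<in>SM' \<Pi>. exp (s J))"
  have Dpos: "D > 0" unfolding D_def using assms(2) finSM' by (intro sum_pos) auto
  have gsum: "(\<Sum>J\<in>SM \<Pi>. g J) = D"
  proof -
    have "(\<Sum>J\<in>SM \<Pi>. g J) = (\<Sum>J\<in>SM' \<Pi>. g J)"
      by (rule sum.mono_neutral_right[OF finSM sub]) (auto simp: g_def)
    then show ?thesis unfolding D_def g_def by simp
  qed
  have slim: "((\<lambda>al. \<Sum>J\<in>SM \<Pi>. f al J) \<longlongrightarrow> D) at_top"
    using tendsto_sum[of "SM \<Pi>" "\<lambda>J al. f al J" g at_top] flim gsum by simp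
  have ratio: "W al \<Pi> I / (\<Sum>J\<in>SM \<Pi>. W al \<Pi> J) =
     (if I \<in> SM \<Pi> then f al I else 0) / (\<Sum>J\<in>SM \<Pi>. f al J)" for al
  proof -
    have "(\<Sum>J\<in>SM \<Pi>. W al \<Pi> J) = exp (al * real m) * (\<Sum>J\<in>SM \<Pi>. f al J)"
      by (simp add: sum_distrib_left Wf)
    moreover have "W al \<Pi> I = exp (al * real m) * (if I \<in> SM \<Pi> then f al I else 0)"
      using Wf by (simp add: W_def)
    ultimately show ?thesis by simp
  qed
  have numlim: "((\<lambda>al. if I \<in> SM \<Pi> then f al I else 0) \<longlongrightarrow> g I) at_top"
    using flim sub by (cases "I \<in> SM \<Pi>") (auto simp: g_def)
  have lim: "((\<lambda>al. W al \<Pi> I / (\<Sum>J\<in>SM \<Pi>. W al \<Pi> J)) \<longlongrightarrow> g I / D) at_top"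
    unfolding ratio using tendsto_divide[OF numlim slim] Dpos by simp
  have "P \<Pi> I = g I / D" unfolding P_def using tendsto_Lim[OF _ lim] by simp
  moreover have "P' \<Pi> I = g I / D"
  proof -
    have "(\<Sum>J\<in>SM' \<Pi>. W' \<Pi> J) = D" unfolding D_def W'_def s_def by simp
    moreover have "W' \<Pi> I = g I" unfolding W'_def g_def s_def by simp
    ultimately show ?thesis unfolding P'_def by simp
  qed
  ultimately show ?thesis by simp
qed

end
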